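(* Let $\mathcal H$ be a real Hilbert space, $T:\mathcal H\rightrightarrows\mathcal H$ maximal monotone, $a,b\ge0$, $\psi(\rho,z):=a\rho^2+b\rho+\big(\rho\|J_{\rho T}(z)-z\|\big)^2$, $z\in\mathcal H$ with $0\notin T(z)$, $0<\theta_-<\theta_+<\infty$, and let $\rho_-,\rho_+>0$ be such that $\psi(\rho_-,z)=\theta_-$ and $\psi(\rho_+,z)=\theta_+$. Let $\rho>0$. (a) If $\psi(\rho,z)<\theta_-$, then $\rho<\rho_-$ and $\rho_+\le\rho\theta_+/\psi(\rho,z)$. (b) If $\psi(\rho,z)>\theta_+$, then $\rho\theta_-/\psi(\rho,z)\le\rho_-$ and $\rho_+<\rho$.
   Context: $J_{\rho T}:=(\rho T+I)^{-1}$ denotes the resolvent of $\rho T$. *)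

theory Defs
  imports "HOL-Analysis.Analysis"
begin

definition monotone_op :: "('a::real_inner \<Rightarrow> 'a set) \<Rightarrow> bool" where
  "monotone_op T \<longleftrightarrow> (\<forall>x y u v. u \<in> T x \<longrightarrow> v \<in> T y \<longrightarrow> inner (x - y) (u - v) \<ge> 0)"

definition maximal_monotone :: "('a::real_inner \<Rightarrow> 'a set) \<Rightarrow> bool" where
  "maximal_monotone T \<longleftrightarrow> monotone_op T \<and>
     (\<forall>S. monotone_op S \<and> (\<forall>x. T x \<subseteq> S x) \<longrightarrow> S = T)"

text \<open>Resolvent J_{\<rho>T} = (\<rho>T + I)^{-1}: J_{\<rho>T}(z) is the (unique, for maximal monotone T
  and \<rho> > 0) point x with z \<in> \<rho> T(x) + x.\<close>
definition resolvent :: "real \<Rightarrow> ('a::real_inner \<Rightarrow> 'a set) \<Rightarrow> 'a \<Rightarrow> 'a" where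
  "resolvent \<rho> T z = (THE x. \<exists>v \<in> T x. z = \<rho> *\<^sub>R v + x)"

definition psi :: "real \<Rightarrow> real \<Rightarrow> ('a::real_inner \<Rightarrow> 'a set) \<Rightarrow> real \<Rightarrow> 'a \<Rightarrow> real" where
  "psi a b T \<rho> z = a * \<rho>\<^sup>2 + b * \<rho> + (\<rho> * norm (resolvent \<rho> T z - z))\<^sup>2"

end

theory Submission
  imports Defs
begin


lemma weighted_ineq:
  fixes F :: "('a::real_inner \<times> 'a) set"
  assumes fin: "finite F"
    and mono: "\<forall>p\<in>F. \<forall>q\<in>F. inner (fst p - fst q) (snd p - snd q) \<le> 0"
    and nn: "\<forall>p\<in>F. \<mu> p \<ge> 0" and s1: "sum \<mu> F = 1"
  shows "(\<Sum>p\<in>F. \<mu> p * inner (fst p) (snd p))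
         \<le> inner (\<Sum>p\<in>F. \<mu> p *\<^sub>R fst p) (\<Sum>p\<in>F. \<mu> p *\<^sub>R snd p)"
proof -
  define A where "A = (\<Sum>p\<in>F. \<Sum>q\<in>F. \<mu> p * \<mu> q * (inner (fst p) (snd p) - inner (fst p) (snd q)))"
  have L: "(\<Sum>p\<in>F. \<mu> p * inner (fst p) (snd p)) = (\<Sum>p\<in>F. \<Sum>q\<in>F. \<mu> p * \<mu> q * inner (fst p) (snd p))"
  proof (rule sum.cong[OF refl])
    fix p assume "p \<in> F"
    have "(\<Sum>q\<in>F. \<mu> p * \<mu> q * inner (fst p) (snd p)) = (\<Sum>q\<in>F. (\<mu> p * inner (fst p) (snd p)) * \<mu> q)"
      by (simp add: ac_simps)
    also have "\<dots> = \<mu> p * inner (fst p) (snd p) * sum \<mu> F"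
      by (simp add: sum_distrib_left)
    finally have "(\<Sum>q\<in>F. \<mu> p * \<mu> q * inner (fst p) (snd p)) = \<mu> p * inner (fst p) (snd p) * sum \<mu> F" .
    then show "\<mu> p * inner (fst p) (snd p) = (\<Sum>q\<in>F. \<mu> p * \<mu> q * inner (fst p) (snd p))"
      using s1 by simp
  qed
  have R: "inner (\<Sum>p\<in>F. \<mu> p *\<^sub>R fst p) (\<Sum>p\<in>F. \<mu> p *\<^sub>R snd p) = (\<Sum>p\<in>F. \<Sum>q\<in>F. \<mu> p * \<mu> q * inner (fst p) (snd q))"
    apply (simp add: inner_sum_left inner_sum_right mult.assoc sum_distrib_left)
    apply (subst sum.swap)
    apply (simp add: ac_simps)
    done
  have A2: "A = (\<Sum>p\<in>F. \<Sum>q\<in>F. \<mu> p * \<mu> q * (inner (fst q) (snd q) - inner (fst q) (snd p)))"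
    unfolding A_def by (subst sum.swap) (simp add: mult.commute)
  have "2 * A = (\<Sum>p\<in>F. \<Sum>q\<in>F. \<mu> p * \<mu> q * inner (fst p - fst q) (snd p - snd q))"
  proof -
    have "2 * A = A + A" by simp
    also have "\<dots> = (\<Sum>p\<in>F. \<Sum>q\<in>F. \<mu> p * \<mu> q * (inner (fst p) (snd p) - inner (fst p) (snd q))
        + \<mu> p * \<mu> q * (inner (fst q) (snd q) - inner (fst q) (snd p)))"
      by (subst A2) (simp add: A_def sum.distrib[symmetric])
    also have "\<dots> = (\<Sum>p\<in>F. \<Sum>q\<in>F. \<mu> p * \<mu> q * inner (fst p - fst q) (snd p - snd q))"
      by (intro sum.cong refl) (simp add: inner_diff_left inner_diff_right algebra_simps)
    finally show ?thesis .
  qed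
  also have "\<dots> \<le> 0"
    using mono nn by (intro sum_nonpos) (simp add: mult_nonneg_nonpos)
  finally have "A \<le> 0" by simp
  moreover have "A = (\<Sum>p\<in>F. \<mu> p * inner (fst p) (snd p)) - inner (\<Sum>p\<in>F. \<mu> p *\<^sub>R fst p) (\<Sum>p\<in>F. \<mu> p *\<^sub>R snd p)"
    unfolding L R A_def by (simp add: sum_subtractf right_diff_distrib)
  ultimately show ?thesis by simp
qed

lemma norm_sq_add_scale:
  fixes m d :: "'a::real_inner"
  shows "(norm (m + t *\<^sub>R d))^2 = (norm m)^2 + 2*t*inner m d + t^2 * (norm d)^2"
  unfolding power2_norm_eq_inner
  by (simp add: inner_add_left inner_add_right inner_commute power2_eq_square algebra_simps)

lemma inner_mid:
  fixes m y w :: "'a::real_inner"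
  shows "inner (m - y) (m - w) = (norm m)^2 - 2 * inner m ((1/2) *\<^sub>R (y+w)) + inner y w"
  by (simp add: power2_norm_eq_inner inner_diff_left inner_diff_right inner_add_right inner_commute algebra_simps)

lemma inner_le_mid:
  fixes y w :: "'a::real_inner"
  shows "inner y w \<le> (norm ((1/2) *\<^sub>R (y+w)))^2"
proof -
  have "0 \<le> (norm (y - w))^2" by simp
  moreover have "(norm ((1/2) *\<^sub>R (y+w)))^2 - inner y w = (norm (y - w))^2 / 4"
    by (simp add: power2_norm_eq_inner inner_diff_left inner_diff_right inner_add_left inner_add_right inner_commute algebra_simps)
  ultimately show ?thesis by linarith
qed

lemma finite_balls:
  fixes F :: "('a::real_inner \<times> 'a) set"
  assumes fin: "finite F"
    and mono: "\<forall>p\<in>F. \<forall>q\<in>F. inner (fst p - fst q) (snd p - snd q) \<le> 0"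
  shows "\<exists>x. \<forall>p\<in>F. inner (x - fst p) (x - snd p) \<le> 0"
proof (cases "F = {}")
  case True then show ?thesis by auto
next
  case False
  define P where "P p = (fst p, snd p, inner (fst p) (snd p))" for p :: "'a \<times> 'a"
  define S where "S = P ` F"
  define g where "g q = snd (snd q) - (norm ((1/2) *\<^sub>R (fst q + fst (snd q))))^2" for q :: "'a \<times> 'a \<times> real"
  have injP: "inj_on P F" by (auto simp: inj_on_def P_def prod_eq_iff)
  have finS: "finite S" using fin by (simp add: S_def)
  have gle: "g q \<le> 0" if "q \<in> convex hull S" for q
  proof -
    have "q \<in> {y. \<exists>u. (\<forall>x\<in>S. 0 \<le> u x) \<and> sum u S = 1 \<and> (\<Sum>x\<in>S. u x *\<^sub>R x) = y}"
      using that convex_hull_finite[OF finS] by simp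
    then obtain u where u: "\<forall>x\<in>S. 0 \<le> u x" "sum u S = 1" "(\<Sum>x\<in>S. u x *\<^sub>R x) = q"
      by blast
    define \<mu> where "\<mu> = u \<circ> P"
    have nn: "\<forall>p\<in>F. \<mu> p \<ge> 0" using u(1) by (auto simp: \<mu>_def S_def)
    have s1: "sum \<mu> F = 1" using u(2) sum.reindex[OF injP, of u] by (simp add: \<mu>_def S_def)
    have q: "q = (\<Sum>p\<in>F. \<mu> p *\<^sub>R P p)"
      using u(3) sum.reindex[OF injP, of "\<lambda>x. u x *\<^sub>R x"] by (simp add: \<mu>_def S_def o_def)
    have q1: "fst q = (\<Sum>p\<in>F. \<mu> p *\<^sub>R fst p)" by (simp add: q fst_sum P_def)
    have q2: "fst (snd q) = (\<Sum>p\<in>F. \<mu> p *\<^sub>R snd p)" by (simp add: q fst_sum snd_sum P_def)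
    have q3: "snd (snd q) = (\<Sum>p\<in>F. \<mu> p * inner (fst p) (snd p))" by (simp add: q snd_sum P_def)
    have "snd (snd q) \<le> inner (fst q) (fst (snd q))"
      using weighted_ineq[OF fin mono nn s1] q1 q2 q3 by simp
    also have "\<dots> \<le> (norm ((1/2) *\<^sub>R (fst q + fst (snd q))))^2"
      by (rule inner_le_mid)
    finally show ?thesis by (simp add: g_def)
  qed
  have cont: "continuous_on (convex hull S) g" unfolding g_def by (intro continuous_intros)
  have ne: "convex hull S \<noteq> {}" using False by (simp add: S_def)
  obtain qs where qs: "qs \<in> convex hull S" "\<forall>q\<in>convex hull S. g q \<le> g qs"
    using continuous_attains_sup[OF finite_imp_compact_convex_hull[OF finS] ne cont] by auto
  define m where "m = (1/2) *\<^sub>R (fst qs + fst (snd qs))"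
  show ?thesis
  proof (intro exI ballI)
    fix p assume pF: "p \<in> F"
    define a where "a = (1/2) *\<^sub>R (fst p + snd p)"
    define c where "c = inner (fst p) (snd p)"
    define D where "D = (c - snd (snd qs)) - 2 * inner m (a - m)"
    define K where "K = (norm (a - m))^2"
    have step: "D \<le> t * K" if t: "0 < t" "t \<le> 1" for t
    proof -
      have PS: "P p \<in> convex hull S" using pF by (auto simp: S_def intro: hull_inc)
      have "(1 - t) *\<^sub>R qs + t *\<^sub>R P p \<in> convex hull S"
        using convexD[OF convex_convex_hull qs(1) PS, of "1-t" t] t by simp
      then have "g ((1 - t) *\<^sub>R qs + t *\<^sub>R P p) \<le> g qs" using qs by auto
      moreover have "g ((1 - t) *\<^sub>R qs + t *\<^sub>R P p) = g qs + t * D - t^2 * K"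
      proof -
        have e1: "(1/2) *\<^sub>R (fst ((1 - t) *\<^sub>R qs + t *\<^sub>R P p) + fst (snd ((1 - t) *\<^sub>R qs + t *\<^sub>R P p)))
                 = m + t *\<^sub>R (a - m)"
          by (simp add: m_def a_def P_def algebra_simps)
        have e2: "snd (snd ((1 - t) *\<^sub>R qs + t *\<^sub>R P p)) = snd (snd qs) + t * (c - snd (snd qs))"
          by (simp add: P_def c_def algebra_simps)
        have g1: "g ((1 - t) *\<^sub>R qs + t *\<^sub>R P p) = snd (snd qs) + t * (c - snd (snd qs))
             - ((norm m)^2 + 2*t*inner m (a - m) + t^2 * K)"
          unfolding g_def e1 e2 norm_sq_add_scale K_def by simp
        have g2: "g qs = snd (snd qs) - (norm m)^2" by (simp add: g_def m_def)
        show ?thesis unfolding g1 g2 D_def by (simp add: inner_diff_right power2_eq_square algebra_simps)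
      qed
      ultimately have "t * D \<le> t * (t * K)" by (simp add: power2_eq_square algebra_simps)
      then show ?thesis using t by simp
    qed
    have K0: "K \<ge> 0" by (simp add: K_def)
    have "D \<le> 0"
    proof (rule ccontr)
      assume "\<not> D \<le> 0"
      then have Dp: "D > 0" by simp
      define t where "t = min 1 (D / (2 * (K + 1)))"
      have tp: "0 < t" "t \<le> 1" using Dp K0 by (auto simp: t_def)
      have "t * K \<le> D / (2 * (K + 1)) * K" using K0 by (intro mult_right_mono) (auto simp: t_def)
      also have "\<dots> < D" using Dp K0 apply (simp add: field_simps) by (smt (verit) mult_nonneg_nonneg)
      finally show False using step[OF tp] by simp
    qed
    have gq: "g qs = snd (snd qs) - (norm m)^2" by (simp add: g_def m_def)
    have "inner (m - fst p) (m - snd p) = (norm m)^2 - 2*inner m a + c"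
      using inner_mid[of m "fst p" "snd p"] by (simp add: a_def c_def)
    then have "inner (m - fst p) (m - snd p) = g qs + D"
      unfolding gq D_def by (simp add: inner_diff_right power2_norm_eq_inner)
    then show "inner (m - fst p) (m - snd p) \<le> 0" using gle[OF qs(1)] \<open>D \<le> 0\<close> by simp
  qed
qed


lemma f_mid:
  fixes x x' y w :: "'a::real_inner"
  shows "inner ((1/2) *\<^sub>R (x + x') - y) ((1/2) *\<^sub>R (x + x') - w)
     = (inner (x - y) (x - w) + inner (x' - y) (x' - w)) / 2 - (norm (x - x'))^2 / 4"
  unfolding power2_norm_eq_inner
  by (simp add: inner_add_left inner_add_right inner_diff_left inner_diff_right inner_commute algebra_simps)
     (simp add: field_simps)

lemma aux_lin: "a \<le> 0 \<Longrightarrow> b \<le> 0 \<Longrightarrow> 0 \<le> c \<Longrightarrow> (a + b) / 2 - c / 4 \<le> (0::real)"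
  by (simp add: field_simps)

lemma parallelogram':
  fixes x x' :: "'a::real_inner"
  shows "(norm (x - x'))^2 = 2 * (norm x)^2 + 2 * (norm x')^2 - 4 * (norm ((1/2) *\<^sub>R (x + x')))^2"
  unfolding power2_norm_eq_inner
  by (simp add: inner_add_left inner_add_right inner_diff_left inner_diff_right inner_commute algebra_simps)

lemma ball_bound:
  fixes x y w :: "'a::real_inner"
  assumes "inner (x - y) (x - w) \<le> 0"
  shows "norm x \<le> norm y + norm w"
proof -
  define a where "a = (1/2) *\<^sub>R (y + w)"
  define b where "b = (1/2) *\<^sub>R (y - w)"
  have "inner (x - y) (x - w) = inner (x - a) (x - a) - inner b b"
    unfolding a_def b_def
    by (simp add: inner_add_left inner_add_right inner_diff_left inner_diff_right inner_commute algebra_simps)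
  then have "inner (x - a) (x - a) - inner b b \<le> 0" using assms by linarith
  then have "(norm (x - a))^2 \<le> (norm b)^2" by (simp only: power2_norm_eq_inner)
  then have 1: "norm (x - a) \<le> norm b"
    using power2_le_imp_le[OF _ norm_ge_zero] by blast
  have 2: "norm x \<le> norm a + norm (x - a)" using norm_triangle_ineq[of a "x - a"] by simp
  have 3: "norm a = norm (y + w) / 2" unfolding a_def by simp
  have 4: "norm b = norm (y - w) / 2" unfolding b_def by simp
  show ?thesis using 1 2 3 4 norm_triangle_ineq[of y w] norm_triangle_ineq4[of y w] by linarith
qed

lemma balls_inter:
  fixes G :: "('a::{real_inner,complete_space} \<times> 'a) set"
  assumes mono: "\<forall>p\<in>G. \<forall>q\<in>G. inner (fst p - fst q) (snd p - snd q) \<le> 0"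
  shows "\<exists>x. \<forall>p\<in>G. inner (x - fst p) (x - snd p) \<le> 0"
proof (cases "G = {}")
  case True then show ?thesis by auto
next
  case False
  then obtain g0 where g0: "g0 \<in> G" by auto
  define K where "K F = {x. \<forall>p\<in>F. inner (x - fst p) (x - snd p) \<le> 0}" for F :: "('a \<times> 'a) set"
  define mF where "mF F = Inf ((\<lambda>x. (norm x)^2) ` K F)" for F
  define Fin where "Fin = {F. finite F \<and> F \<subseteq> G}"
  have Kne: "K F \<noteq> {}" if "F \<in> Fin" for F
  proof -
    have "\<forall>p\<in>F. \<forall>q\<in>F. inner (fst p - fst q) (snd p - snd q) \<le> 0" using mono that by (auto simp: Fin_def)
    then show ?thesis using finite_balls[of F] that by (auto simp: Fin_def K_def)
  qed
  have Kanti: "K F' \<subseteq> K F" if "F \<subseteq> F'" for F F' using that by (auto simp: K_def)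
  have bdd: "bdd_below ((\<lambda>x. (norm x)^2) ` K F)" for F by (rule bdd_belowI[of _ 0]) auto
  have mlow: "mF F \<le> (norm x)^2" if "x \<in> K F" for F x
    unfolding mF_def using that bdd by (intro cInf_lower) auto
  have mapprox: "\<exists>x\<in>K F. (norm x)^2 < mF F + \<epsilon>" if "F \<in> Fin" "\<epsilon> > 0" for F \<epsilon>
  proof -
    have lt: "mF F < mF F + \<epsilon>" using that by simp
    have ne: "(\<lambda>x. (norm x)^2) ` K F \<noteq> {}" using Kne[OF that(1)] by simp
    from cInf_less_iff[OF ne bdd] lt have "\<exists>y\<in>(\<lambda>x. (norm x)^2) ` K F. y < mF F + \<epsilon>"
      unfolding mF_def by blast
    then show ?thesis by blast
  qed
  have mmono: "mF F \<le> mF F'" if "F' \<in> Fin" "F \<subseteq> F'" for F F'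
    unfolding mF_def using Kne[OF that(1)] Kanti[OF that(2)] bdd
    by (intro cInf_superset_mono) auto
  have midin: "(1/2) *\<^sub>R (x + x') \<in> K F" if "x \<in> K F" "x' \<in> K F" for F x x'
  proof -
    { fix p assume "p \<in> F"
      then have "inner (x - fst p) (x - snd p) \<le> 0" "inner (x' - fst p) (x' - snd p) \<le> 0"
        using that by (auto simp: K_def)
      then have "inner ((1/2) *\<^sub>R (x + x') - fst p) ((1/2) *\<^sub>R (x + x') - snd p) \<le> 0"
        unfolding f_mid by (rule aux_lin) simp_all }
    then show ?thesis by (auto simp: K_def)
  qed
  have close: "(norm (x - x'))^2 \<le> 2 * (norm x)^2 + 2 * (norm x')^2 - 4 * mF F"
    if "x \<in> K F" "x' \<in> K F" for F x x'
    using parallelogram'[of x x'] mlow[OF midin[OF that]] by linarith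
  define R where "R = (norm (fst g0) + norm (snd g0))^2"
  have mR: "mF F \<le> R" if "F \<in> Fin" for F
  proof -
    have F': "insert g0 F \<in> Fin" using that g0 by (auto simp: Fin_def)
    then obtain x where x: "x \<in> K (insert g0 F)" using Kne by blast
    then have "inner (x - fst g0) (x - snd g0) \<le> 0" by (auto simp: K_def)
    then have "norm x \<le> norm (fst g0) + norm (snd g0)" by (rule ball_bound)
    then have "(norm x)^2 \<le> R" unfolding R_def by (intro power_mono) auto
    moreover have "mF F \<le> mF (insert g0 F)" using mmono[OF F'] by auto
    ultimately show ?thesis using mlow[OF x] by linarith
  qed
  define e where "e = Sup (mF ` Fin)"
  have Finne: "mF ` Fin \<noteq> {}" by (auto simp: Fin_def)
  have bddA: "bdd_above (mF ` Fin)" using mR by (intro bdd_aboveI[of _ R]) auto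
  have me: "mF F \<le> e" if "F \<in> Fin" for F unfolding e_def using that bddA by (intro cSup_upper) auto
  have "\<forall>n::nat. \<exists>F\<in>Fin. e - 1 / (real n + 1) < mF F"
  proof
    fix n :: nat
    have "e - 1 / (real n + 1) < e" by simp
    then show "\<exists>F\<in>Fin. e - 1 / (real n + 1) < mF F"
      unfolding e_def using less_cSup_iff[OF Finne bddA] by auto
  qed
  then obtain Fs where Fs: "\<And>n. Fs n \<in> Fin" "\<And>n. e - 1 / (real n + 1) < mF (Fs n)"
    by metis
  define H where "H n = (\<Union>k\<le>n. Fs k)" for n
  have HFin: "H n \<in> Fin" for n using Fs(1) by (auto simp: H_def Fin_def)
  have Hmono: "H n \<subseteq> H m" if "n \<le> m" for n m
    unfolding H_def by (rule UN_mono) (use that in auto)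
  have He: "e - 1 / (real n + 1) < mF (H n)" for n
  proof -
    have "Fs n \<subseteq> H n" by (auto simp: H_def)
    then show ?thesis using Fs(2)[of n] mmono[OF HFin, of "Fs n" n] by linarith
  qed
  have "\<forall>n. \<exists>x\<in>K (H n). (norm x)^2 < mF (H n) + 1 / (real n + 1)"
    using mapprox[OF HFin] by simp
  then obtain x where x: "\<And>n. x n \<in> K (H n)" "\<And>n. (norm (x n))^2 < mF (H n) + 1 / (real n + 1)"
    by metis
  have key: "(norm (x n - x'))^2 \<le> 8 / (real n + 1)"
    if "F \<in> Fin" "H n \<subseteq> F" "x' \<in> K F" "(norm x')^2 < e + 1 / (real n + 1)" for n F x'
  proof -
    have "x' \<in> K (H n)" using that Kanti by blast
    then have "(norm (x n - x'))^2 \<le> 2 * (norm (x n))^2 + 2 * (norm x')^2 - 4 * mF (H n)"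
      using close x(1) by blast
    moreover have "(norm (x n))^2 < e + 1 / (real n + 1)" using x(2)[of n] me[OF HFin, of n] by linarith
    ultimately show ?thesis using He[of n] that(4) by simp
  qed
  have keyn: "norm (x n - x') \<le> sqrt (8 / (real n + 1))"
    if "F \<in> Fin" "H n \<subseteq> F" "x' \<in> K F" "(norm x')^2 < e + 1 / (real n + 1)" for n F x'
    using key[OF that] by (rule real_le_rsqrt)
  have xle: "(norm (x m))^2 < e + 1 / (real n + 1)" if "n \<le> m" for n m
  proof -
    have "(norm (x m))^2 < e + 1 / (real m + 1)" using x(2)[of m] me[OF HFin, of m] by linarith
    moreover have "1 / (real m + 1) \<le> 1 / (real n + 1)"
      using that by (intro divide_left_mono) auto
    ultimately show ?thesis by linarith
  qed
  have cau: "Cauchy x"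
  proof (rule CauchyI)
    fix \<epsilon> :: real assume ep: "\<epsilon> > 0"
    obtain n :: nat where "32 / \<epsilon>^2 < real n" using reals_Archimedean2 by blast
    then have "32 / \<epsilon>^2 < real n + 1" by linarith
    then obtain N :: nat where N: "32 / \<epsilon>^2 < real N + 1" by blast
    have b: "norm (x N - x m) < \<epsilon> / 2" if "m \<ge> N" for m
    proof -
      have "norm (x N - x m) \<le> sqrt (8 / (real N + 1))"
        using keyn[OF HFin Hmono[OF that] x(1) xle[OF that]] .
      also have "\<dots> < \<epsilon> / 2"
      proof (rule real_less_lsqrt)
        show "0 \<le> \<epsilon> / 2" using ep by simp
        have "8 / (real N + 1) < 8 / (32 / \<epsilon>^2)"
        proof (rule divide_strict_left_mono)
          show "32 / \<epsilon>^2 < real N + 1" by (rule N)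
          show "0 < (8::real)" by simp
          show "0 < (real N + 1) * (32 / \<epsilon>^2)" using ep by simp
        qed
        also have "\<dots> = (\<epsilon> / 2)^2" by (simp add: power2_eq_square field_simps)
        finally show "8 / (real N + 1) < (\<epsilon> / 2)^2" .
      qed
      finally show ?thesis .
    qed
    show "\<exists>M. \<forall>m\<ge>M. \<forall>n\<ge>M. norm (x m - x n) < \<epsilon>"
    proof (intro exI allI impI)
      fix m n assume "N \<le> m" "N \<le> n"
      have t: "norm (x m - x n) \<le> norm (x m - x N) + norm (x N - x n)"
        using norm_triangle_ineq[of "x m - x N" "x N - x n"] by simp
      have "norm (x m - x N) = norm (x N - x m)" by (rule norm_minus_commute)
      then show "norm (x m - x n) < \<epsilon>" using t b[OF \<open>N \<le> m\<close>] b[OF \<open>N \<le> n\<close>] by linarith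
    qed
  qed
  then have "convergent x" by (rule Cauchy_convergent)
  then obtain L where L: "x \<longlonglongrightarrow> L" unfolding convergent_def by blast
  have sq0: "(\<lambda>n. sqrt (8 / (real n + 1))) \<longlonglongrightarrow> 0"
  proof -
    have "(\<lambda>n. 8 * inverse (real (Suc n))) \<longlonglongrightarrow> 8 * 0"
      by (intro tendsto_mult tendsto_const LIMSEQ_inverse_real_of_nat)
    then have "(\<lambda>n. 8 / (real n + 1)) \<longlonglongrightarrow> 0" by (simp add: field_simps)
    then have "(\<lambda>n. sqrt (8 / (real n + 1))) \<longlonglongrightarrow> sqrt 0" by (intro tendsto_real_sqrt)
    then show ?thesis by simp
  qed
  show ?thesis
  proof (intro exI ballI)
    fix p assume pG: "p \<in> G"
    have HpFin: "insert p (H n) \<in> Fin" for n using HFin[of n] pG by (auto simp: Fin_def)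
    have "\<forall>n. \<exists>x'\<in>K (insert p (H n)). (norm x')^2 < mF (insert p (H n)) + 1 / (real n + 1)"
      using mapprox[OF HpFin] by simp
    then obtain x' where x': "\<And>n. x' n \<in> K (insert p (H n))"
      "\<And>n. (norm (x' n))^2 < mF (insert p (H n)) + 1 / (real n + 1)"
      by metis
    have x'le: "(norm (x' n))^2 < e + 1 / (real n + 1)" for n
      using x'(2)[of n] me[OF HpFin, of n] by linarith
    have bnd: "norm (x n - x' n) \<le> sqrt (8 / (real n + 1))" for n
      using keyn[OF HpFin subset_insertI x'(1) x'le] .
    have ev: "\<forall>n. norm (x n - x' n) \<le> sqrt (8 / (real n + 1))" using bnd by blast
    have "(\<lambda>n. x n - x' n) \<longlonglongrightarrow> 0"
    proof -
      have e2: "eventually (\<lambda>n. norm (x n - x' n) \<le> sqrt (8 / (real n + 1))) sequentially"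
        using ev by simp
      show ?thesis using Lim_null_comparison[OF e2 sq0] .
    qed
    from tendsto_diff[OF L this] have "(\<lambda>n. x n - (x n - x' n)) \<longlonglongrightarrow> L - 0" .
    moreover have "(\<lambda>n. x n - (x n - x' n)) = x'" by (rule ext) simp
    ultimately have x'L: "x' \<longlonglongrightarrow> L" by simp
    have tl: "(\<lambda>n. inner (x' n - fst p) (x' n - snd p)) \<longlonglongrightarrow> inner (L - fst p) (L - snd p)"
      by (rule tendsto_inner[OF tendsto_diff[OF x'L tendsto_const] tendsto_diff[OF x'L tendsto_const]])
    have "\<forall>n. inner (x' n - fst p) (x' n - snd p) \<le> 0" using x'(1) by (auto simp: K_def)
    then have "\<exists>N. \<forall>n\<ge>N. inner (x' n - fst p) (x' n - snd p) \<le> 0" by blast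
    with tl show "inner (L - fst p) (L - snd p) \<le> 0"
      by (rule LIMSEQ_le_const2)
  qed
qed


lemma minty:
  fixes T :: "'a::{real_inner,complete_space} \<Rightarrow> 'a set"
  assumes mm: "maximal_monotone T" and rho: "\<rho> > 0"
  shows "\<exists>x. \<exists>v\<in>T x. z = \<rho> *\<^sub>R v + x"
proof -
  have mono: "monotone_op T" using mm by (simp add: maximal_monotone_def)
  define G where "G = {(y, z - \<rho> *\<^sub>R v) | y v. v \<in> T y}"
  have "\<forall>p\<in>G. \<forall>q\<in>G. inner (fst p - fst q) (snd p - snd q) \<le> 0"
  proof (intro ballI)
    fix p q assume "p \<in> G" "q \<in> G"
    then obtain y1 v1 y2 v2 where p: "p = (y1, z - \<rho> *\<^sub>R v1)" "v1 \<in> T y1"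
      and q: "q = (y2, z - \<rho> *\<^sub>R v2)" "v2 \<in> T y2" by (auto simp: G_def)
    have t: "inner (y1 - y2) (v1 - v2) \<ge> 0" using mono p(2) q(2) by (simp add: monotone_op_def)
    have e: "inner (fst p - fst q) (snd p - snd q) = - (\<rho> * inner (y1 - y2) (v1 - v2))"
      using p(1) q(1) by (simp add: inner_diff_right algebra_simps)
    have "\<rho> * inner (y1 - y2) (v1 - v2) \<ge> 0" using rho t by simp
    then show "inner (fst p - fst q) (snd p - snd q) \<le> 0" using e by linarith
  qed
  from balls_inter[OF this] obtain x where x: "\<forall>p\<in>G. inner (x - fst p) (x - snd p) \<le> 0" by blast
  define u where "u = (1/\<rho>) *\<^sub>R (z - x)"
  define S where "S = (\<lambda>y. if y = x then insert u (T y) else T y)"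
  have key: "inner (x - y) (u - v) \<ge> 0" if "v \<in> T y" for y v
  proof -
    have "(y, z - \<rho> *\<^sub>R v) \<in> G" using that by (auto simp: G_def)
    then have i: "inner (x - y) (x - (z - \<rho> *\<^sub>R v)) \<le> 0" using x by auto
    have "u - v = (-(1/\<rho>)) *\<^sub>R (x - (z - \<rho> *\<^sub>R v))" using rho by (simp add: u_def algebra_simps)
    then have "inner (x - y) (u - v) = -(1/\<rho>) * inner (x - y) (x - (z - \<rho> *\<^sub>R v))" by simp
    moreover have "(1/\<rho>) * inner (x - y) (x - (z - \<rho> *\<^sub>R v)) \<le> 0"
      using divide_nonpos_pos[OF i rho] by simp
    ultimately show ?thesis by linarith
  qed
  have Smono: "monotone_op S"
    unfolding monotone_op_def
  proof (intro allI impI)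
    fix y1 y2 u1 u2 assume h1: "u1 \<in> S y1" and h2: "u2 \<in> S y2"
    from h1 have c1: "u1 \<in> T y1 \<or> (y1 = x \<and> u1 = u)" by (auto simp: S_def split: if_splits)
    from h2 have c2: "u2 \<in> T y2 \<or> (y2 = x \<and> u2 = u)" by (auto simp: S_def split: if_splits)
    show "inner (y1 - y2) (u1 - u2) \<ge> 0"
    proof (cases "u1 \<in> T y1")
      case True
      show ?thesis
      proof (cases "u2 \<in> T y2")
        case True
        with \<open>u1 \<in> T y1\<close> show ?thesis using mono by (simp add: monotone_op_def)
      next
        case False
        with c2 have "y2 = x" "u2 = u" by auto
        moreover have "inner (y1 - x) (u1 - u) = inner (x - y1) (u - u1)"
          by (metis inner_minus_left inner_minus_right minus_diff_eq minus_minus)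
        ultimately show ?thesis using key[OF True] by simp
      qed
    next
      case False
      with c1 have a1: "y1 = x" "u1 = u" by auto
      show ?thesis
      proof (cases "u2 \<in> T y2")
        case True
        then show ?thesis using key[OF True] a1 by simp
      next
        case False
        with c2 have "y2 = x" "u2 = u" by auto
        then show ?thesis using a1 by simp
      qed
    qed
  qed
  have "\<forall>y. T y \<subseteq> S y" by (auto simp: S_def)
  then have "S = T" using mm Smono by (auto simp: maximal_monotone_def)
  then have "S x = T x" by simp
  then have "insert u (T x) = T x" by (simp add: S_def)
  then have "u \<in> T x" by blast
  moreover have "z = \<rho> *\<^sub>R u + x" using rho by (simp add: u_def)
  ultimately show ?thesis by blast
qed

lemma resolvent_prop:
  fixes T :: "'a::{real_inner,complete_space} \<Rightarrow> 'a set"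
  assumes mm: "maximal_monotone T" and rho: "\<rho> > 0"
  shows "\<exists>v\<in>T (resolvent \<rho> T z). z = \<rho> *\<^sub>R v + resolvent \<rho> T z"
proof -
  have mono: "monotone_op T" using mm by (simp add: maximal_monotone_def)
  obtain x v where xv: "v \<in> T x" "z = \<rho> *\<^sub>R v + x" using minty[OF mm rho, of z] by blast
  have uniq: "x' = x" if h: "v' \<in> T x'" "z = \<rho> *\<^sub>R v' + x'" for x' v'
  proof -
    have t: "inner (x' - x) (v' - v) \<ge> 0" using mono h(1) xv(1) by (simp add: monotone_op_def)
    have d: "x' - x = \<rho> *\<^sub>R (v - v')" using h(2) xv(2) by (simp add: algebra_simps)
    have "inner (x' - x) (v' - v) = - (\<rho> * inner (v - v') (v - v'))"
      unfolding d by (simp add: inner_diff_right inner_diff_left algebra_simps)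
    then have "\<rho> * inner (v - v') (v - v') \<le> 0" using t by linarith
    then have "inner (v - v') (v - v') \<le> 0" using rho by (simp add: mult_le_0_iff)
    then have "inner (v - v') (v - v') = 0" using inner_ge_zero[of "v - v'"] by linarith
    then have "v - v' = 0" by simp
    then show ?thesis using d by simp
  qed
  have "resolvent \<rho> T z = x" unfolding resolvent_def
  proof (rule the_equality)
    show "\<exists>v\<in>T x. z = \<rho> *\<^sub>R v + x" using xv by blast
    fix x' assume "\<exists>v\<in>T x'. z = \<rho> *\<^sub>R v + x'"
    then show "x' = x" using uniq by blast
  qed
  then show ?thesis using xv by auto
qed

lemma resolvent_mono:
  fixes T :: "'a::{real_inner,complete_space} \<Rightarrow> 'a set"
  assumes mm: "maximal_monotone T" and r1: "0 < r1" and r12: "r1 < r2" and nz: "0 \<notin> T z"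
  shows "norm (resolvent r1 T z - z) \<le> norm (resolvent r2 T z - z)"
proof -
  have mono: "monotone_op T" using mm by (simp add: maximal_monotone_def)
  have r2: "0 < r2" using r1 r12 by simp
  obtain v1 where v1: "v1 \<in> T (resolvent r1 T z)" "z = r1 *\<^sub>R v1 + resolvent r1 T z"
    using resolvent_prop[OF mm r1] by blast
  obtain v2 where v2: "v2 \<in> T (resolvent r2 T z)" "z = r2 *\<^sub>R v2 + resolvent r2 T z"
    using resolvent_prop[OF mm r2] by blast
  define J1 where "J1 = resolvent r1 T z"
  define J2 where "J2 = resolvent r2 T z"
  have e1: "J1 - z = - (r1 *\<^sub>R v1)" using v1(2) by (simp add: J1_def algebra_simps)
  have e2: "J2 - z = - (r2 *\<^sub>R v2)" using v2(2) by (simp add: J2_def algebra_simps)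
  have t: "inner (J1 - J2) (v1 - v2) \<ge> 0" using mono v1(1) v2(1) by (simp add: monotone_op_def J1_def J2_def)
  have d: "J1 - J2 = r2 *\<^sub>R v2 - r1 *\<^sub>R v1" using e1 e2 by (simp add: algebra_simps)
  define a where "a = norm v1"
  define b where "b = norm v2"
  have "inner (J1 - J2) (v1 - v2) = (r1 + r2) * inner v1 v2 - r1 * (inner v1 v1) - r2 * (inner v2 v2)"
    unfolding d by (simp add: inner_diff_right inner_diff_left inner_commute algebra_simps)
  moreover have "inner v1 v1 = a^2" "inner v2 v2 = b^2" by (simp_all add: a_def b_def power2_norm_eq_inner)
  moreover have "inner v1 v2 \<le> a * b" unfolding a_def b_def by (rule norm_cauchy_schwarz)
  ultimately have eq: "inner (J1 - J2) (v1 - v2) = (r1 + r2) * inner v1 v2 - r1 * a^2 - r2 * b^2"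
    and cs: "inner v1 v2 \<le> a * b" by simp_all
  have "(r1 + r2) * inner v1 v2 \<le> (r1 + r2) * (a * b)"
    using cs r1 r2 by (intro mult_left_mono) auto
  then have ineq: "r1 * a^2 + r2 * b^2 \<le> (r1 + r2) * (a * b)"
    using t eq by linarith
  have a0: "a \<ge> 0" "b \<ge> 0" by (simp_all add: a_def b_def)
  have "r1 * a \<le> r2 * b"
  proof (rule ccontr)
    assume "\<not> r1 * a \<le> r2 * b"
    then have c: "r2 * b < r1 * a" by simp
    have "r1 * b \<le> r2 * b" using r12 a0 by (simp add: mult_right_mono)
    then have "r1 * b < r1 * a" using c by linarith
    then have ab: "b < a" using r1 by simp
    have "0 < (a - b) * (r1 * a - r2 * b)" using ab c by simp
    moreover have "(a - b) * (r1 * a - r2 * b) = r1 * a^2 + r2 * b^2 - (r1 + r2) * (a * b)"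
      by (simp add: power2_eq_square algebra_simps)
    ultimately show False using ineq by linarith
  qed
  moreover have "norm (J1 - z) = r1 * a" using e1 r1 by (simp add: a_def)
  moreover have "norm (J2 - z) = r2 * b" using e2 r2 by (simp add: b_def)
  ultimately show ?thesis by (simp add: J1_def J2_def)
qed

lemma resolvent_pos:
  fixes T :: "'a::{real_inner,complete_space} \<Rightarrow> 'a set"
  assumes mm: "maximal_monotone T" and r: "0 < r" and nz: "0 \<notin> T z"
  shows "0 < norm (resolvent r T z - z)"
proof -
  obtain v where v: "v \<in> T (resolvent r T z)" "z = r *\<^sub>R v + resolvent r T z"
    using resolvent_prop[OF mm r] by blast
  show ?thesis
  proof (rule ccontr)
    assume "\<not> 0 < norm (resolvent r T z - z)"
    then have "resolvent r T z = z" by simp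
    then have "r *\<^sub>R v = 0" using v(2) by simp
    then have "v = 0" using r by simp
    then show False using v(1) nz \<open>resolvent r T z = z\<close> by simp
  qed
qed

lemma psi_props:
  fixes T :: "'a::{real_inner,complete_space} \<Rightarrow> 'a set"
  assumes mm: "maximal_monotone T" and a: "a \<ge> 0" and b: "b \<ge> 0" and nz: "0 \<notin> T z"
    and r1: "0 < r1" and r12: "r1 < r2"
  shows "psi a b T r1 z < psi a b T r2 z" and "psi a b T r1 z * r2 \<le> psi a b T r2 z * r1"
proof -
  define d1 where "d1 = norm (resolvent r1 T z - z)"
  define d2 where "d2 = norm (resolvent r2 T z - z)"
  have r2: "0 < r2" using r1 r12 by simp
  have dd: "d1 \<le> d2" unfolding d1_def d2_def by (rule resolvent_mono[OF mm r1 r12 nz])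
  have d1p: "0 < d1" unfolding d1_def by (rule resolvent_pos[OF mm r1 nz])
  have p1: "psi a b T r1 z = a * r1^2 + b * r1 + (r1 * d1)^2" by (simp add: psi_def d1_def)
  have p2: "psi a b T r2 z = a * r2^2 + b * r2 + (r2 * d2)^2" by (simp add: psi_def d2_def)
  have s1: "r1 * d1 < r2 * d2"
  proof -
    have "r1 * d1 < r2 * d1" using r12 d1p by simp
    also have "\<dots> \<le> r2 * d2" using dd r2 by simp
    finally show ?thesis .
  qed
  have "(r1 * d1)^2 < (r2 * d2)^2" using s1 r1 d1p by (intro power_strict_mono) auto
  moreover have "a * r1^2 \<le> a * r2^2" using a r1 r12 by (intro mult_left_mono power_mono) auto
  moreover have "b * r1 \<le> b * r2" using b r12 by (simp add: mult_left_mono)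
  ultimately show "psi a b T r1 z < psi a b T r2 z" unfolding p1 p2 by linarith
  have q1: "psi a b T r1 z * r2 = r1 * r2 * (a * r1 + b + r1 * d1^2)"
    unfolding p1 by (simp add: power2_eq_square algebra_simps)
  have q2: "psi a b T r2 z * r1 = r1 * r2 * (a * r2 + b + r2 * d2^2)"
    unfolding p2 by (simp add: power2_eq_square algebra_simps)
  have "d1^2 \<le> d2^2" using dd d1p by (intro power_mono) auto
  then have "r1 * d1^2 \<le> r2 * d2^2" using r1 r12
    by (intro mult_mono) auto
  moreover have "a * r1 \<le> a * r2" using a r12 by (simp add: mult_left_mono)
  ultimately have "a * r1 + b + r1 * d1^2 \<le> a * r2 + b + r2 * d2^2" by linarith
  then show "psi a b T r1 z * r2 \<le> psi a b T r2 z * r1"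
    unfolding q1 q2 using r1 r2 by (intro mult_left_mono) auto
qed

lemma psi_pos:
  fixes T :: "'a::{real_inner,complete_space} \<Rightarrow> 'a set"
  assumes mm: "maximal_monotone T" and a: "a \<ge> 0" and b: "b \<ge> 0" and nz: "0 \<notin> T z"
    and r: "0 < r"
  shows "psi a b T r z > 0"
proof -
  have "0 < norm (resolvent r T z - z)" by (rule resolvent_pos[OF mm r nz])
  then have "0 < (r * norm (resolvent r T z - z))^2" using r by simp
  moreover have "0 \<le> a * r^2" "0 \<le> b * r" using a b r by simp_all
  ultimately show ?thesis unfolding psi_def by linarith
qed

theorem lemma5p7:
  fixes T :: "'a::{real_inner, complete_space} \<Rightarrow> 'a set"
    and a b \<theta>m \<theta>p \<rho>m \<rho>p \<rho> :: real and z :: 'a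
  assumes "maximal_monotone T"
    and "a \<ge> 0" and "b \<ge> 0"
    and "0 \<notin> T z"
    and "0 < \<theta>m" and "\<theta>m < \<theta>p"
    and "\<rho>m > 0" and "\<rho>p > 0"
    and "psi a b T \<rho>m z = \<theta>m" and "psi a b T \<rho>p z = \<theta>p"
    and "\<rho> > 0"
  shows "(psi a b T \<rho> z < \<theta>m \<longrightarrow> \<rho> < \<rho>m \<and> \<rho>p \<le> \<rho> * \<theta>p / psi a b T \<rho> z)
       \<and> (psi a b T \<rho> z > \<theta>p \<longrightarrow> \<rho> * \<theta>m / psi a b T \<rho> z \<le> \<rho>m \<and> \<rho>p < \<rho>)"
proof -
  note mm = assms(1) and a = assms(2) and b = assms(3) and nz = assms(4)
  define P where "P r = psi a b T r z" for r
  have smono: "P r1 < P r2" if "0 < r1" "r1 < r2" for r1 r2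
    unfolding P_def by (rule psi_props(1)[OF mm a b nz that])
  have wmono: "P r1 \<le> P r2" if "0 < r1" "r1 \<le> r2" for r1 r2
  proof (cases "r1 = r2")
    case True then show ?thesis by simp
  next
    case False then show ?thesis using smono[OF that(1), of r2] that(2) by simp
  qed
  have ratio: "P r1 * r2 \<le> P r2 * r1" if "0 < r1" "r1 \<le> r2" for r1 r2
  proof (cases "r1 = r2")
    case True then show ?thesis by simp
  next
    case False then show ?thesis unfolding P_def using psi_props(2)[OF mm a b nz that(1)] that by simp
  qed
  have Pp: "P \<rho> > 0" unfolding P_def by (rule psi_pos[OF mm a b nz assms(11)])
  have Pm: "P \<rho>m = \<theta>m" and Ppp: "P \<rho>p = \<theta>p" using assms(9,10) by (simp_all add: P_def)
  have A: "\<rho> < \<rho>m \<and> \<rho>p \<le> \<rho> * \<theta>p / P \<rho>" if h: "P \<rho> < \<theta>m"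
  proof
    show "\<rho> < \<rho>m"
    proof (rule ccontr)
      assume "\<not> \<rho> < \<rho>m"
      then have "P \<rho>m \<le> P \<rho>" using wmono[OF assms(7)] by simp
      then show False using h Pm by simp
    qed
    have "\<rho> < \<rho>p"
    proof (rule ccontr)
      assume "\<not> \<rho> < \<rho>p"
      then have "P \<rho>p \<le> P \<rho>" using wmono[OF assms(8)] by simp
      then show False using h Ppp assms(6) by simp
    qed
    then have "P \<rho> * \<rho>p \<le> P \<rho>p * \<rho>" using ratio[OF assms(11)] by simp
    then have "\<rho>p * P \<rho> \<le> \<rho> * \<theta>p" using Ppp by (simp add: mult.commute)
    then show "\<rho>p \<le> \<rho> * \<theta>p / P \<rho>" using Pp by (simp add: pos_le_divide_eq)
  qed
  have B: "\<rho> * \<theta>m / P \<rho> \<le> \<rho>m \<and> \<rho>p < \<rho>" if h: "P \<rho> > \<theta>p"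
  proof
    show "\<rho>p < \<rho>"
    proof (rule ccontr)
      assume "\<not> \<rho>p < \<rho>"
      then have "P \<rho> \<le> P \<rho>p" using wmono[OF assms(11)] by simp
      then show False using h Ppp by simp
    qed
    have "\<rho>m < \<rho>"
    proof (rule ccontr)
      assume "\<not> \<rho>m < \<rho>"
      then have "P \<rho> \<le> P \<rho>m" using wmono[OF assms(11)] by simp
      then show False using h Pm assms(6) by simp
    qed
    then have "P \<rho>m * \<rho> \<le> P \<rho> * \<rho>m" using ratio[OF assms(7)] by simp
    then have "\<rho> * \<theta>m \<le> \<rho>m * P \<rho>" using Pm by (simp add: mult.commute)
    then show "\<rho> * \<theta>m / P \<rho> \<le> \<rho>m" using Pp by (simp add: pos_divide_le_eq)
  qed
  show ?thesis using A B unfolding P_def by blast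
qed

end
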